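(* Let $G$ be a discrete group and $1<p<\infty$, and let $B_1=\{f\in\ell^1(G):\|f\|_{A_p(G)}\le 1\}$ be the unit ball of $(\ell^1(G),\cdot,\|\cdot\|_{A_p(G)})$. Suppose $B_1$ is bounded in the $\ell^1$-norm, i.e. there is $\alpha>0$ with $\|f\|_1\le\alpha$ for all $f\in B_1$. Then: (i) $(\ell^1(G),\cdot,\|\cdot\|_{A_p(G)})$ is Arens regular; (ii) $A_p(G)$ is Arens regular; (iii) $G$ has no infinite abelian subgroup; (iv) there is no sequence $(H_n)$ of finite subgroups of $G$ with $|H_1|<|H_2|<|H_3|<\cdots$; (v) there is $M>0$ such that $O(x)\le M$ for every $x\in G$, where $O(x)$ denotes the order of $x$.
   Context: For a discrete group $G$ and $1<p<\infty$, $\frac1p+\frac1q=1$, $A_p(G)$ is the space of functions $u=\sum_{i=1}^\infty g_i*f_i^{\vee}$ with $f_i\in \ell_p(G)$, $g_i\in \ell_q(G)$, $\sum_i\|f_i\|_p\|g_i\|_q<\infty$, where $f^{\vee}(x)=f(x^{-1})$; with pointwise multiplication and norm $\|u\|_{A_p(G)}=\inf\{\sum_i\|f_i\|_p\|g_i\|_q\}$ it is a commutative Banach algebra (the Herz algebra), and $\ell^1(G)\subseteq A_p(G)$ with $\|f\|_{A_p(G)}\le\|f\|_1$. A (normed) algebra $A$ is Arens regular if for all sequences $(a_n),(b_m)$ in its closed unit ball and all $T\in A^*$, $\lim_n\lim_m T(a_nb_m)=\lim_m\lim_n T(a_nb_m)$ whenever both exist. *)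

theory Defs
  imports "HOL-Analysis.Analysis" "HOL-Algebra.Multiplicative_Group"
begin

text \<open>Discrete group G (HOL-Algebra structure); functions G \<rightarrow> complex are
  represented as total functions that vanish off the carrier.\<close>

definition conj_exp :: "real \<Rightarrow> real" where
  "conj_exp p = p / (p - 1)"

definition in_lp :: "('a, 'b) monoid_scheme \<Rightarrow> real \<Rightarrow> ('a \<Rightarrow> complex) \<Rightarrow> bool" where
  "in_lp G p f \<longleftrightarrow> (\<forall>x. x \<notin> carrier G \<longrightarrow> f x = 0) \<and>
     (\<lambda>x. norm (f x) powr p) summable_on carrier G"

definition lp_norm :: "('a, 'b) monoid_scheme \<Rightarrow> real \<Rightarrow> ('a \<Rightarrow> complex) \<Rightarrow> real" where
  "lp_norm G p f = (\<Sum>\<^sub>\<infinity>x\<in>carrier G. norm (f x) powr p) powr (1 / p)"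

definition check_fun :: "('a, 'b) monoid_scheme \<Rightarrow> ('a \<Rightarrow> complex) \<Rightarrow> ('a \<Rightarrow> complex)" where
  "check_fun G f = (\<lambda>x. if x \<in> carrier G then f (inv\<^bsub>G\<^esub> x) else 0)"

definition conv :: "('a, 'b) monoid_scheme \<Rightarrow> ('a \<Rightarrow> complex) \<Rightarrow> ('a \<Rightarrow> complex) \<Rightarrow> ('a \<Rightarrow> complex)" where
  "conv G g h = (\<lambda>x. if x \<in> carrier G
      then (\<Sum>\<^sub>\<infinity>y\<in>carrier G. g y * h (inv\<^bsub>G\<^esub> y \<otimes>\<^bsub>G\<^esub> x)) else 0)"

definition Ap_rep :: "('a, 'b) monoid_scheme \<Rightarrow> real \<Rightarrow> ('a \<Rightarrow> complex)
     \<Rightarrow> (nat \<Rightarrow> 'a \<Rightarrow> complex) \<Rightarrow> (nat \<Rightarrow> 'a \<Rightarrow> complex) \<Rightarrow> bool" where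
  "Ap_rep G p u f g \<longleftrightarrow>
     (\<forall>i. in_lp G p (f i) \<and> in_lp G (conj_exp p) (g i)) \<and>
     summable (\<lambda>i. lp_norm G p (f i) * lp_norm G (conj_exp p) (g i)) \<and>
     (\<forall>x\<in>carrier G. (\<lambda>i. conv G (g i) (check_fun G (f i)) x) sums u x) \<and>
     (\<forall>x. x \<notin> carrier G \<longrightarrow> u x = 0)"

definition Ap_space :: "('a, 'b) monoid_scheme \<Rightarrow> real \<Rightarrow> ('a \<Rightarrow> complex) set" where
  "Ap_space G p = {u. \<exists>f g. Ap_rep G p u f g}"

definition Ap_norm :: "('a, 'b) monoid_scheme \<Rightarrow> real \<Rightarrow> ('a \<Rightarrow> complex) \<Rightarrow> real" where
  "Ap_norm G p u = Inf {(\<Sum>i. lp_norm G p (f i) * lp_norm G (conj_exp p) (g i)) | f g. Ap_rep G p u f g}"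

definition dual_space :: "('a \<Rightarrow> complex) set \<Rightarrow> (('a \<Rightarrow> complex) \<Rightarrow> real)
     \<Rightarrow> ((('a \<Rightarrow> complex) \<Rightarrow> complex)) set" where
  "dual_space A N = {T. (\<forall>a\<in>A. \<forall>b\<in>A. T (\<lambda>x. a x + b x) = T a + T b) \<and>
      (\<forall>a\<in>A. \<forall>c. T (\<lambda>x. c * a x) = c * T a) \<and>
      (\<exists>C. \<forall>a\<in>A. norm (T a) \<le> C * N a)}"

definition Arens_regular :: "('a \<Rightarrow> complex) set \<Rightarrow> (('a \<Rightarrow> complex) \<Rightarrow> real) \<Rightarrow> bool" where
  "Arens_regular A N \<longleftrightarrow>
     (\<forall>a b :: nat \<Rightarrow> 'a \<Rightarrow> complex. \<forall>T \<in> dual_space A N. \<forall>\<alpha> \<beta> L1 L2.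
        (\<forall>n. a n \<in> A \<and> N (a n) \<le> 1) \<and> (\<forall>m. b m \<in> A \<and> N (b m) \<le> 1) \<and>
        (\<forall>n. (\<lambda>m. T (\<lambda>x. a n x * b m x)) \<longlonglongrightarrow> \<alpha> n) \<and> \<alpha> \<longlonglongrightarrow> L1 \<and>
        (\<forall>m. (\<lambda>n. T (\<lambda>x. a n x * b m x)) \<longlonglongrightarrow> \<beta> m) \<and> \<beta> \<longlonglongrightarrow> L2
        \<longrightarrow> L1 = L2)"

definition l1_space :: "('a, 'b) monoid_scheme \<Rightarrow> ('a \<Rightarrow> complex) set" where
  "l1_space G = {f. in_lp G 1 f}"

end

theory Submission
  imports Defs
begin


lemma subseq_conv:
  fixes a :: "nat \<Rightarrow> 'x \<Rightarrow> complex"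
  assumes "finite C" "\<forall>n. \<forall>x\<in>C. norm (a n x) \<le> K"
  shows "\<exists>l r. strict_mono r \<and> (\<forall>x\<in>C. (\<lambda>n. a (r n) x) \<longlonglongrightarrow> l x)"
proof -
  have "\<forall>\<delta>\<subseteq>C. \<exists>l. \<exists>r::nat\<Rightarrow>nat. strict_mono r \<and>
     (\<forall>e>0. eventually (\<lambda>n. \<forall>i\<in>\<delta>. dist (a (r n) i) (l i) < e) sequentially)"
    apply (rule compact_lemma_general[where proj = "\<lambda>f k. f k" and unproj = "\<lambda>f. f"])
    using assms by (auto simp: bounded_iff)
  then obtain l and r :: "nat \<Rightarrow> nat" where r: "strict_mono r"
    and ev: "\<forall>e>0. eventually (\<lambda>n. \<forall>i\<in>C. dist (a (r n) i) (l i) < e) sequentially"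
    by blast
  have "\<forall>x\<in>C. (\<lambda>n. a (r n) x) \<longlonglongrightarrow> l x"
  proof
    fix x assume "x \<in> C"
    show "(\<lambda>n. a (r n) x) \<longlonglongrightarrow> l x"
      unfolding tendsto_iff
    proof (intro allI impI)
      fix e :: real assume "e > 0"
      with ev have "eventually (\<lambda>n. \<forall>i\<in>C. dist (a (r n) i) (l i) < e) sequentially" by blast
      then show "eventually (\<lambda>n. dist (a (r n) x) (l x) < e) sequentially"
        by eventually_elim (use \<open>x \<in> C\<close> in blast)
    qed
  qed
  with r show ?thesis by blast
qed

lemma iter_lim:
  fixes a b :: "nat \<Rightarrow> 'x \<Rightarrow> complex" and c :: "'x \<Rightarrow> complex"
  assumes C: "finite C" and ba: "\<forall>n. \<forall>x\<in>C. norm (a n x) \<le> K" and bb: "\<forall>m. \<forall>x\<in>C. norm (b m x) \<le> K"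
  and h1: "\<forall>n. (\<lambda>m. \<Sum>x\<in>C. c x * a n x * b m x) \<longlonglongrightarrow> \<alpha> n" and h2: "\<alpha> \<longlonglongrightarrow> L1"
  and h3: "\<forall>m. (\<lambda>n. \<Sum>x\<in>C. c x * a n x * b m x) \<longlonglongrightarrow> \<beta> m" and h4: "\<beta> \<longlonglongrightarrow> L2"
  shows "L1 = L2"
proof -
  obtain la r where r: "strict_mono r" and ra: "\<forall>x\<in>C. (\<lambda>n. a (r n) x) \<longlonglongrightarrow> la x"
    using subseq_conv[OF C ba] by blast
  obtain lb s where s: "strict_mono s" and sb: "\<forall>x\<in>C. (\<lambda>n. b (s n) x) \<longlonglongrightarrow> lb x"
    using subseq_conv[OF C bb] by blast
  have aeq: "\<alpha> n = (\<Sum>x\<in>C. c x * a n x * lb x)" for n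
  proof -
    have "(\<lambda>m. \<Sum>x\<in>C. c x * a n x * b (s m) x) \<longlonglongrightarrow> \<alpha> n"
      using LIMSEQ_subseq_LIMSEQ[OF h1[rule_format, of n] s] by (simp add: o_def)
    moreover have "(\<lambda>m. \<Sum>x\<in>C. c x * a n x * b (s m) x) \<longlonglongrightarrow> (\<Sum>x\<in>C. c x * a n x * lb x)"
      by (intro tendsto_sum tendsto_mult tendsto_const) (use sb in auto)
    ultimately show ?thesis using LIMSEQ_unique by blast
  qed
  have beq: "\<beta> m = (\<Sum>x\<in>C. c x * la x * b m x)" for m
  proof -
    have "(\<lambda>n. \<Sum>x\<in>C. c x * a (r n) x * b m x) \<longlonglongrightarrow> \<beta> m"
      using LIMSEQ_subseq_LIMSEQ[OF h3[rule_format, of m] r] by (simp add: o_def)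
    moreover have "(\<lambda>n. \<Sum>x\<in>C. c x * a (r n) x * b m x) \<longlonglongrightarrow> (\<Sum>x\<in>C. c x * la x * b m x)"
      by (intro tendsto_sum tendsto_mult tendsto_const) (use ra in auto)
    ultimately show ?thesis using LIMSEQ_unique by blast
  qed
  have "(\<lambda>n. \<alpha> (r n)) \<longlonglongrightarrow> L1"
    using LIMSEQ_subseq_LIMSEQ[OF h2 r] by (simp add: o_def)
  moreover have "(\<lambda>n. \<alpha> (r n)) \<longlonglongrightarrow> (\<Sum>x\<in>C. c x * la x * lb x)"
    unfolding aeq by (intro tendsto_sum tendsto_mult tendsto_const) (use ra in auto)
  ultimately have 1: "L1 = (\<Sum>x\<in>C. c x * la x * lb x)" using LIMSEQ_unique by blast
  have "(\<lambda>n. \<beta> (s n)) \<longlonglongrightarrow> L2"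
    using LIMSEQ_subseq_LIMSEQ[OF h4 s] by (simp add: o_def)
  moreover have "(\<lambda>n. \<beta> (s n)) \<longlonglongrightarrow> (\<Sum>x\<in>C. c x * la x * lb x)"
    unfolding beq by (intro tendsto_sum tendsto_mult tendsto_const) (use sb in auto)
  ultimately have 2: "L2 = (\<Sum>x\<in>C. c x * la x * lb x)" using LIMSEQ_unique by blast
  from 1 2 show ?thesis by simp
qed



lemma lp_norm_zero[simp]: "lp_norm G p (\<lambda>_. 0) = 0"
  by (simp add: lp_norm_def)

lemma in_lp_zero[simp]: "in_lp G p (\<lambda>_. 0)"
  by (simp add: in_lp_def)

lemma lp_norm_nonneg: "0 \<le> lp_norm G p f"
  by (simp add: lp_norm_def)

definition delta1 :: "('a, 'b) monoid_scheme \<Rightarrow> 'a \<Rightarrow> complex" where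
  "delta1 G = (\<lambda>x. if x = one G then 1 else 0)"

lemma delta1_lp:
  fixes G (structure)
  assumes "group G" "0 < p"
  shows "in_lp G p (delta1 G)" "lp_norm G p (delta1 G) = 1"
proof -
  interpret group G by fact
  have eq: "(\<lambda>x. norm (delta1 G x) powr p) = (\<lambda>x. if x = \<one> then 1 else 0)"
    by (auto simp: delta1_def)
  have "(\<lambda>x. norm (delta1 G x) powr p) summable_on carrier G"
  proof -
    have "(\<lambda>x. if x = \<one> then 1 else 0::real) summable_on carrier G \<longleftrightarrow>
          (\<lambda>x. if x = \<one> then 1 else 0::real) summable_on {\<one>}"
      by (rule summable_on_cong_neutral) auto
    then show ?thesis unfolding eq by simp
  qed
  then show "in_lp G p (delta1 G)" by (auto simp: in_lp_def delta1_def)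
  have "infsum (\<lambda>x. norm (delta1 G x) powr p) (carrier G) = infsum (\<lambda>x. norm (delta1 G x) powr p) {\<one>}"
    unfolding eq by (rule infsum_cong_neutral) auto
  then show "lp_norm G p (delta1 G) = 1"
    by (simp add: lp_norm_def delta1_def)
qed

lemma conv_delta:
  fixes G (structure)
  assumes "group G" "x \<in> carrier G"
  shows "conv G u (check_fun G (delta1 G)) x = u x"
proof -
  interpret group G by fact
  have "conv G u (check_fun G (delta1 G)) x =
      infsum (\<lambda>y. u y * check_fun G (delta1 G) (inv y \<otimes> x)) (carrier G)"
    using assms by (simp add: conv_def)
  also have "\<dots> = infsum (\<lambda>y. u y * check_fun G (delta1 G) (inv y \<otimes> x)) {x}"
  proof (rule infsum_cong_neutral)
    fix y assume y: "y \<in> carrier G - {x}"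
    have yc: "y \<in> carrier G" "y \<noteq> x" using y by auto
    have e1: "inv (inv y \<otimes> x) = inv x \<otimes> y" using yc assms by (simp add: inv_mult_group)
    have "inv x \<otimes> y \<noteq> \<one>"
    proof
      assume h: "inv x \<otimes> y = \<one>"
      have "y = x \<otimes> (inv x \<otimes> y)" using yc assms by (simp add: m_assoc[symmetric])
      also have "\<dots> = x" using h assms by simp
      finally show False using yc by simp
    qed
    then have "inv (inv y \<otimes> x) \<noteq> \<one>" using e1 by simp
    then show "u y * check_fun G (delta1 G) (inv y \<otimes> x) = 0"
      using y assms by (simp add: check_fun_def delta1_def)
  qed (use assms in auto)
  also have "\<dots> = u x" using assms by (simp add: check_fun_def delta1_def)
  finally show ?thesis .
qed

lemma rep_single:
  assumes "group G" "1 < p" "in_lp G (conj_exp p) u"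
  shows "Ap_rep G p u (\<lambda>i. if i = 0 then delta1 G else (\<lambda>_. 0)) (\<lambda>i. if i = 0 then u else (\<lambda>_. 0))"
    and "(\<Sum>i. lp_norm G p ((\<lambda>i. if i = 0 then delta1 G else (\<lambda>_. 0)) i) *
              lp_norm G (conj_exp p) ((\<lambda>i. if i = 0 then u else (\<lambda>_. 0)) i)) = lp_norm G (conj_exp p) u"
proof -
  have d: "in_lp G p (delta1 G)" "lp_norm G p (delta1 G) = 1"
    using delta1_lp[OF assms(1)] assms(2) by auto
  have seq: "(\<lambda>i. lp_norm G p ((\<lambda>i. if i = 0 then delta1 G else (\<lambda>_. 0)) i) *
              lp_norm G (conj_exp p) ((\<lambda>i. if i = 0 then u else (\<lambda>_. 0)) i))
     = (\<lambda>i. if i = 0 then lp_norm G (conj_exp p) u else 0)"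
    using d by auto
  have sm: "(\<lambda>i. if i = 0 then lp_norm G (conj_exp p) u else 0) sums lp_norm G (conj_exp p) u"
    using sums_single[of 0 "\<lambda>_. lp_norm G (conj_exp p) u"] by simp
  show "(\<Sum>i. lp_norm G p ((\<lambda>i. if i = 0 then delta1 G else (\<lambda>_. 0)) i) *
              lp_norm G (conj_exp p) ((\<lambda>i. if i = 0 then u else (\<lambda>_. 0)) i)) = lp_norm G (conj_exp p) u"
    unfolding seq using sm sums_unique by metis
  have summ: "summable (\<lambda>i. lp_norm G p ((\<lambda>i. if i = 0 then delta1 G else (\<lambda>_. 0)) i) *
              lp_norm G (conj_exp p) ((\<lambda>i. if i = 0 then u else (\<lambda>_. 0)) i))"
    unfolding seq using sm by (rule sums_summable)
  have conv0: "conv G (\<lambda>_. 0) h x = 0" for h x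
    by (simp add: conv_def)
  have "\<forall>x\<in>carrier G. (\<lambda>i. conv G ((\<lambda>i. if i = 0 then u else (\<lambda>_. 0)) i)
          (check_fun G ((\<lambda>i. if i = 0 then delta1 G else (\<lambda>_. 0)) i)) x) sums u x"
  proof
    fix x assume x: "x \<in> carrier G"
    have e: "conv G ((\<lambda>i. if i = 0 then u else (\<lambda>_. 0)) i)
          (check_fun G ((\<lambda>i. if i = 0 then delta1 G else (\<lambda>_. 0)) i)) x = (if i = 0 then u x else 0)" for i
      using conv_delta[OF assms(1) x] conv0 by auto
    have "(\<lambda>i. if i = 0 then u x else 0) sums u x"
      using sums_single[of 0 "\<lambda>_. u x"] by simp
    then show "(\<lambda>i. conv G ((\<lambda>i. if i = 0 then u else (\<lambda>_. 0)) i)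
          (check_fun G ((\<lambda>i. if i = 0 then delta1 G else (\<lambda>_. 0)) i)) x) sums u x"
      unfolding e .
  qed
  then show "Ap_rep G p u (\<lambda>i. if i = 0 then delta1 G else (\<lambda>_. 0)) (\<lambda>i. if i = 0 then u else (\<lambda>_. 0))"
    unfolding Ap_rep_def using d assms(3) summ by (auto simp: in_lp_def)
qed

lemma Ap_norm_le:
  assumes "group G" "1 < p" "in_lp G (conj_exp p) u"
  shows "u \<in> Ap_space G p" "Ap_norm G p u \<le> lp_norm G (conj_exp p) u"
proof -
  note r = rep_single[OF assms]
  show "u \<in> Ap_space G p" using r(1) unfolding Ap_space_def by blast
  have "bdd_below {(\<Sum>i. lp_norm G p (f i) * lp_norm G (conj_exp p) (g i)) | f g. Ap_rep G p u f g}"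
    by (rule bdd_belowI[of _ 0]) (auto simp: Ap_rep_def intro!: suminf_nonneg mult_nonneg_nonneg lp_norm_nonneg)
  moreover have "lp_norm G (conj_exp p) u \<in> {(\<Sum>i. lp_norm G p (f i) * lp_norm G (conj_exp p) (g i)) | f g. Ap_rep G p u f g}"
    apply (rule CollectI)
    apply (rule exI[where x="\<lambda>i. if i=0 then delta1 G else (\<lambda>_. 0)"])
    apply (rule exI[where x="\<lambda>i. if i=0 then u else (\<lambda>_. 0)"])
    using r by simp
  ultimately show "Ap_norm G p u \<le> lp_norm G (conj_exp p) u"
    unfolding Ap_norm_def by (simp add: cInf_lower)
qed



lemma lin_rep:
  fixes T :: "('x \<Rightarrow> complex) \<Rightarrow> complex"
  assumes C: "finite C"
    and add: "\<forall>a\<in>{f. \<forall>x. x \<notin> C \<longrightarrow> f x = 0}. \<forall>b\<in>{f. \<forall>x. x \<notin> C \<longrightarrow> f x = 0}. T (\<lambda>x. a x + b x) = T a + T b"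
    and smul: "\<forall>a\<in>{f. \<forall>x. x \<notin> C \<longrightarrow> f x = 0}. \<forall>c. T (\<lambda>x. c * a x) = c * T a"
    and u: "\<forall>x. x \<notin> C \<longrightarrow> u x = 0"
  shows "T u = (\<Sum>x\<in>C. u x * T (\<lambda>y. if y = x then 1 else 0))"
proof -
  have gen: "S \<subseteq> C \<Longrightarrow> T (\<lambda>y. \<Sum>x\<in>S. u x * (if y = x then 1 else 0)) = (\<Sum>x\<in>S. u x * T (\<lambda>y. if y = x then 1 else 0))" for S
  proof (induction S rule: infinite_finite_induct)
    case (infinite S)
    then show ?case using C finite_subset by blast
  next
    case empty
    have "T (\<lambda>x. 0 * (\<lambda>_. 0::complex) x) = 0 * T (\<lambda>x. 0)" using smul[rule_format, of "\<lambda>_. 0" 0] by simp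
    then show ?case by simp
  next
    case (insert x S)
    have xC: "x \<in> C" and SC: "S \<subseteq> C" using insert.prems by auto
    have "T (\<lambda>y. \<Sum>z\<in>insert x S. u z * (if y = z then 1 else 0)) =
          T (\<lambda>y. u x * (if y = x then 1 else 0) + (\<Sum>z\<in>S. u z * (if y = z then 1 else 0)))"
      using insert.hyps by simp
    also have "\<dots> = T (\<lambda>y. u x * (if y = x then 1 else 0)) + T (\<lambda>y. \<Sum>z\<in>S. u z * (if y = z then 1 else 0))"
      using add xC SC by (auto intro!: add[rule_format] sum.neutral)
    also have "T (\<lambda>y. u x * (if y = x then 1 else 0)) = u x * T (\<lambda>y. if y = x then 1 else 0)"
      using smul xC by auto
    finally show ?case using insert SC by simp
  qed
  have "u = (\<lambda>y. \<Sum>x\<in>C. u x * (if y = x then 1 else 0))"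
  proof
    fix y show "u y = (\<Sum>x\<in>C. u x * (if y = x then 1 else 0))"
      using C u by (cases "y \<in> C") (auto simp: if_distrib[of "\<lambda>t. _ * t"] cong: if_cong)
  qed
  then show ?thesis using gen[of C] by simp
qed

lemma arens_fin:
  fixes N :: "('x \<Rightarrow> complex) \<Rightarrow> real"
  assumes C: "finite C"
    and A: "A = {f. \<forall>x. x \<notin> C \<longrightarrow> f x = 0}"
    and bnd: "\<forall>a\<in>A. N a \<le> 1 \<longrightarrow> (\<forall>x\<in>C. norm (a x) \<le> K)"
  shows "Arens_regular A N"
  unfolding Arens_regular_def
proof (intro allI ballI impI)
  fix a b :: "nat \<Rightarrow> 'x \<Rightarrow> complex" and T \<alpha> \<beta> L1 L2
  assume T: "T \<in> dual_space A N"
  assume h: "(\<forall>n. a n \<in> A \<and> N (a n) \<le> 1) \<and> (\<forall>m. b m \<in> A \<and> N (b m) \<le> 1) \<and>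
        (\<forall>n. (\<lambda>m. T (\<lambda>x. a n x * b m x)) \<longlonglongrightarrow> \<alpha> n) \<and> \<alpha> \<longlonglongrightarrow> L1 \<and>
        (\<forall>m. (\<lambda>n. T (\<lambda>x. a n x * b m x)) \<longlonglongrightarrow> \<beta> m) \<and> \<beta> \<longlonglongrightarrow> L2"
  define c where "c x = T (\<lambda>y. if y = x then 1 else 0)" for x
  have rep: "T (\<lambda>x. a n x * b m x) = (\<Sum>x\<in>C. c x * a n x * b m x)" for n m
  proof -
    have "a n \<in> A" using h by blast
    then have "\<forall>x. x \<notin> C \<longrightarrow> a n x * b m x = 0" using A by auto
    from lin_rep[OF C _ _ this] T A show ?thesis
      unfolding dual_space_def c_def by (auto simp: mult_ac)
  qed
  show "L1 = L2"
    apply (rule iter_lim[OF C, of a K b c \<alpha> L1 \<beta> L2])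
    using h bnd by (auto simp: rep[symmetric])
qed



lemma infsum_const_on:
  assumes "finite E" "E \<subseteq> C" "0 < r" "0 \<le> c"
  shows "(\<lambda>x. norm (if x \<in> E then complex_of_real c else 0) powr r) summable_on C"
    "infsum (\<lambda>x. norm (if x \<in> E then complex_of_real c else 0) powr r) C = real (card E) * c powr r"
proof -
  have eq: "(\<lambda>x. norm (if x \<in> E then complex_of_real c else 0) powr r) = (\<lambda>x. if x \<in> E then c powr r else 0)"
    using assms by auto
  have "(\<lambda>x. if x \<in> E then c powr r else 0) summable_on C \<longleftrightarrow> (\<lambda>x. if x \<in> E then c powr r else 0) summable_on E"
    by (rule summable_on_cong_neutral) (use assms in auto)
  then show "(\<lambda>x. norm (if x \<in> E then complex_of_real c else 0) powr r) summable_on C"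
    unfolding eq using assms by simp
  have "infsum (\<lambda>x. if x \<in> E then c powr r else 0) C = infsum (\<lambda>x. if x \<in> E then c powr r else 0) E"
    by (rule infsum_cong_neutral) (use assms in auto)
  then show "infsum (\<lambda>x. norm (if x \<in> E then complex_of_real c else 0) powr r) C = real (card E) * c powr r"
    unfolding eq using assms by simp
qed

lemma carrier_finite:
  assumes G: "group G" and p: "1 < p"
    and hyp: "\<exists>\<alpha>>0. \<forall>f\<in>l1_space G. Ap_norm G p f \<le> 1 \<longrightarrow> lp_norm G 1 f \<le> \<alpha>"
  shows "finite (carrier G)"
proof (rule ccontr)
  assume inf: "infinite (carrier G)"
  obtain \<alpha> where a0: "\<alpha> > 0" and ha: "\<forall>f\<in>l1_space G. Ap_norm G p f \<le> 1 \<longrightarrow> lp_norm G 1 f \<le> \<alpha>"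
    using hyp by blast
  define q where "q = conj_exp p"
  have q1: "1 < q" using p by (simp add: q_def conj_exp_def)
  obtain n :: nat where n: "real n > \<alpha> powr p" using reals_Archimedean2 by blast
  have n0: "n > 0" using n by (metis a0 of_nat_0 powr_gt_zero gr0I less_asym)
  obtain E where E: "E \<subseteq> carrier G" "finite E" "card E = n"
    using infinite_arbitrarily_large[OF inf] by blast
  define c where "c = (1 / real n) powr (1 / q)"
  have c0: "0 \<le> c" by (simp add: c_def)
  define u where "u = (\<lambda>x. if x \<in> E then complex_of_real c else 0)"
  have uoff: "\<forall>x. x \<notin> carrier G \<longrightarrow> u x = 0" using E by (auto simp: u_def)
  have luq: "in_lp G q u" using infsum_const_on[OF E(2,1) _ c0, of q] q1 uoff
    by (simp add: in_lp_def u_def)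
  have cq: "c powr q = 1 / real n" using q1 by (simp add: c_def powr_powr)
  have nq: "lp_norm G q u = 1"
    using infsum_const_on[OF E(2,1) _ c0, of q] q1 n0 E(3) cq by (simp add: lp_norm_def u_def)
  have apn: "Ap_norm G p u \<le> 1" using Ap_norm_le(2)[OF G p luq[unfolded q_def]] nq by (simp add: q_def)
  have l1: "u \<in> l1_space G" using infsum_const_on[OF E(2,1) _ c0, of 1] uoff
    by (simp add: l1_space_def in_lp_def u_def)
  have n1: "lp_norm G 1 u = real n * c"
    using infsum_const_on[OF E(2,1) _ c0, of 1] E(3) c0 by (simp add: lp_norm_def u_def)
  have "real n * c = real n powr (1 / p)"
  proof -
    have "real n * c = real n powr 1 * real n powr (- (1 / q))"
      using n0 by (simp add: c_def powr_minus_divide powr_divide)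
    also have "\<dots> = real n powr (1 + - (1 / q))" by (rule powr_add[symmetric])
    also have "\<dots> = real n powr (1 - 1 / q)" by simp
    also have "1 - 1 / q = 1 / p" using p by (simp add: q_def conj_exp_def field_simps)
    finally show ?thesis .
  qed
  also have "\<dots> > (\<alpha> powr p) powr (1 / p)"
    using n p a0 by (intro powr_less_mono2) auto
  also have "(\<alpha> powr p) powr (1 / p) = \<alpha>" using p a0 by (simp add: powr_powr)
  finally have "lp_norm G 1 u > \<alpha>" using n1 by simp
  with ha l1 apn show False by force
qed



theorem theorem3p7:
  fixes G :: "('a, 'b) monoid_scheme" and p :: real
  assumes "group G" and "1 < p"
    and "\<exists>\<alpha>>0. \<forall>f\<in>l1_space G. Ap_norm G p f \<le> 1 \<longrightarrow> lp_norm G 1 f \<le> \<alpha>"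
  shows "Arens_regular (l1_space G) (Ap_norm G p) \<and>
         Arens_regular (Ap_space G p) (Ap_norm G p) \<and>
         \<not> (\<exists>H. subgroup H G \<and> infinite H \<and> comm_group (G\<lparr>carrier := H\<rparr>)) \<and>
         \<not> (\<exists>Hs :: nat \<Rightarrow> 'a set. (\<forall>n. subgroup (Hs n) G \<and> finite (Hs n)) \<and>
              (\<forall>n. card (Hs n) < card (Hs (Suc n)))) \<and>
         (\<exists>M::nat>0. \<forall>x\<in>carrier G. 0 < group.ord G x \<and> group.ord G x \<le> M)"
proof -
  interpret group G by fact
  have fin: "finite (carrier G)" by (rule carrier_finite[OF assms])
  obtain \<alpha> where ha: "\<forall>f\<in>l1_space G. Ap_norm G p f \<le> 1 \<longrightarrow> lp_norm G 1 f \<le> \<alpha>"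
    using assms(3) by blast
  define V where "V = {f :: 'a \<Rightarrow> complex. \<forall>x. x \<notin> carrier G \<longrightarrow> f x = 0}"
  have l1eq: "l1_space G = V"
    using fin by (auto simp: V_def l1_space_def in_lp_def)
  have apeq: "Ap_space G p = V"
  proof
    show "Ap_space G p \<subseteq> V" by (auto simp: V_def Ap_space_def Ap_rep_def)
    show "V \<subseteq> Ap_space G p"
    proof
      fix u assume "u \<in> V"
      then have "in_lp G (conj_exp p) u" using fin by (auto simp: V_def in_lp_def)
      then show "u \<in> Ap_space G p" using Ap_norm_le(1)[OF assms(1,2)] by blast
    qed
  qed
  have bnd: "\<forall>a\<in>V. Ap_norm G p a \<le> 1 \<longrightarrow> (\<forall>x\<in>carrier G. norm (a x) \<le> \<alpha>)"
  proof (intro ballI impI)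
    fix a x assume a: "a \<in> V" "Ap_norm G p a \<le> 1" and x: "x \<in> carrier G"
    have "lp_norm G 1 a \<le> \<alpha>" using ha a l1eq by blast
    moreover have "lp_norm G 1 a = (\<Sum>y\<in>carrier G. norm (a y))"
      using fin by (simp add: lp_norm_def sum_nonneg)
    moreover have "norm (a x) \<le> (\<Sum>y\<in>carrier G. norm (a y))"
      using fin x by (intro member_le_sum) auto
    ultimately show "norm (a x) \<le> \<alpha>" by simp
  qed
  have A1: "Arens_regular (l1_space G) (Ap_norm G p)"
    using arens_fin[OF fin _ bnd[unfolded V_def]] l1eq V_def by simp
  have A2: "Arens_regular (Ap_space G p) (Ap_norm G p)"
    using arens_fin[OF fin _ bnd[unfolded V_def]] apeq V_def by simp
  have P3: "\<not> (\<exists>H. subgroup H G \<and> infinite H \<and> comm_group (G\<lparr>carrier := H\<rparr>))"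
    using fin subgroup.subset finite_subset by blast
  have P4: "\<not> (\<exists>Hs :: nat \<Rightarrow> 'a set. (\<forall>n. subgroup (Hs n) G \<and> finite (Hs n)) \<and>
              (\<forall>n. card (Hs n) < card (Hs (Suc n))))"
  proof
    assume "\<exists>Hs :: nat \<Rightarrow> 'a set. (\<forall>n. subgroup (Hs n) G \<and> finite (Hs n)) \<and>
              (\<forall>n. card (Hs n) < card (Hs (Suc n)))"
    then obtain Hs :: "nat \<Rightarrow> 'a set" where s: "\<forall>n. subgroup (Hs n) G" and c: "\<forall>n. card (Hs n) < card (Hs (Suc n))"
      by blast
    have ge: "n \<le> card (Hs n)" for n
    proof (induction n)
      case (Suc n)
      then show ?case using c[rule_format, of n] by simp
    qed simp
    have le: "card (Hs n) \<le> card (carrier G)" for n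
      by (rule card_mono[OF fin subgroup.subset[OF s[rule_format]]])
    show False using ge[of "Suc (card (carrier G))"] le[of "Suc (card (carrier G))"] by simp
  qed
  have ord0: "0 < order G" using fin order_gt_0_iff_finite by blast
  have P5: "\<exists>M::nat>0. \<forall>x\<in>carrier G. 0 < group.ord G x \<and> group.ord G x \<le> M"
  proof (intro exI[of _ "order G"] conjI ballI ord0)
    fix x assume x: "x \<in> carrier G"
    have d: "ord x dvd order G" by (rule ord_dvd_group_order[OF x])
    show "0 < ord x"
    proof (rule ccontr)
      assume "\<not> 0 < ord x"
      then have "ord x = 0" by simp
      with d ord0 show False by simp
    qed
    show "ord x \<le> order G" using d ord0 by (rule dvd_imp_le)
  qed
  show ?thesis by (intro conjI A1 A2 P3 P4 P5)
qed


end
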